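(* Fix an sBS $k$, a time slot $t$, and $\epsilon>0$. Let $\hat{\mathbf P}_k^{(t)}$ be an estimate of $\mathbf P_k$ obtained either by the point estimator or by the Bayesian estimator, and let $(\mathbf u_t,\mathbf v_t)\in\arg\max_{(\mathbf u,\mathbf v)\in\mathcal C_{c,r}}\mathbf u^T\hat{\mathbf P}_k^{(t)}\mathbf v$. Let $\widehat{\Delta P}^{(t)}:=\mathbf P_k-\hat{\mathbf P}_k^{(t)}$ and let $\mathcal N_\epsilon$ be an $\epsilon$-cover of $\mathcal C_{c,r}$. Then $$\Pr\Big\{\sup_{(\mathbf u,\mathbf v)\in\mathcal C_{c,r}}\mathbf u^T\mathbf P_k\mathbf v-\mathbf u_t^T\mathbf P_k\mathbf v_t\ge\epsilon\Big\}\le|\mathcal N_\epsilon|\,\Pr\Big\{\|\widehat{\Delta P}^{(t)}\|_F\ge\frac{\epsilon}{4\kappa rc}\Big\}.$$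
   Context: Setting: a catalog of $F$ files $\{1,\dots,F\}$; time is slotted; in every slot each of $N$ users of a small base station (sBS) requests a file. For sBS $k$, the probability transition matrix (PTM) $\mathbf P_k\in[0,1]^{F\times F}$ has entries $(\mathbf P_k)_{ij}=p_{ij,k}$, the probability that a user at sBS $k$ requests file $i$ given that file $j$ is recommended; $\mathbf P_k$ does not change over time. For a cache size $c>0$ and a recommendation budget $r>0$, the strategy set is $\mathcal C_{c,r}=\{(\mathbf u,\mathbf v)\in[0,1]^F\times[0,1]^F:\mathbf u^T\mathbf 1\le c,\ \mathbf v^T\mathbf 1\le r\}$, where $u_i$ (resp. $v_j$) is the probability of caching file $i$ (resp. recommending file $j$); the average cache hit of $(\mathbf u,\mathbf v)$ at sBS $k$ is $\mathbf u^T\mathbf P_k\mathbf v$. $d_{ik}^{(s)}$ is the number of requests for file $i$ at sBS $k$ in slot $s$, and $v_{jk}^{s}\in\{0,1\}$ indicates whether file $j$ was recommended at sBS $k$ in slot $s$. Point estimator: $\hat p_{ij,k}^{(t)}=\frac{\sum_{s=0}^{t-1}d_{ik}^{(s)}v_{jk}^{s-1}}{N\sum_{s=0}^{t-1}v_{jk}^{s-1}}$. Bayesian estimator: for each $j$ independently, the column $(\hat p^{(t)}_{1j,k},\dots,\hat p^{(t)}_{Fj,k})$ is drawn from the Dirichlet distribution $\mathrm{Dir}(\alpha^{(t)}_{1jk},\dots,\alpha^{(t)}_{Fjk})$ with $\alpha^{(t)}_{ijk}=\sum_{q=1}^{t-1}d_{ik}^{(q)}v_{jk}^{q-1}$. An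 $\epsilon$-cover of $\mathcal C_{c,r}$ is a finite set $\mathcal N_\epsilon$ of pairs $(\mathbf x,\mathbf y)$ such that for every $(\mathbf u,\mathbf v)\in\mathcal C_{c,r}$ some $(\mathbf x,\mathbf y)\in\mathcal N_\epsilon$ satisfies $\|\mathbf u-\mathbf x\|_2\le\epsilon/8$ and $\|\mathbf v-\mathbf y\|_2\le\epsilon/8$; $|\mathcal N_\epsilon|$ is its cardinality. $\kappa>0$ is a fixed constant such that $|\mathbf x^T A\mathbf y|\le\kappa\|\mathbf x\|_1\|\mathbf y\|_1\|A\|_F$ for all vectors $\mathbf x,\mathbf y$ and matrices $A$. *)

theory Defs
  imports "HOL-Probability.Probability"
begin

text \<open>Files are indexed by a finite type 'f (so F = CARD('f)).
  Vectors are real^'f, matrices real^'f^'f with (A $ i $ j) the (i,j) entry.\<close>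

definition l1norm :: "real^'f \<Rightarrow> real" where
  "l1norm x = (\<Sum>i\<in>UNIV. \<bar>x $ i\<bar>)"

definition frob_norm :: "real^'f^'f \<Rightarrow> real" where
  "frob_norm A = sqrt (\<Sum>i\<in>UNIV. \<Sum>j\<in>UNIV. (A $ i $ j)^2)"

definition cache_hit :: "real^'f \<Rightarrow> real^'f^'f \<Rightarrow> real^'f \<Rightarrow> real" where
  "cache_hit u P v = u \<bullet> (P *v v)"

definition strat_set :: "real \<Rightarrow> real \<Rightarrow> ((real^'f) \<times> (real^'f)) set" where
  "strat_set c r = {(u, v). (\<forall>i. 0 \<le> u $ i \<and> u $ i \<le> 1) \<and> (\<forall>j. 0 \<le> v $ j \<and> v $ j \<le> 1)
                      \<and> (\<Sum>i\<in>UNIV. u $ i) \<le> c \<and> (\<Sum>j\<in>UNIV. v $ j) \<le> r}"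

definition is_eps_cover :: "real \<Rightarrow> real \<Rightarrow> real \<Rightarrow> ((real^'f) \<times> (real^'f)) set \<Rightarrow> bool" where
  "is_eps_cover eps c r N \<longleftrightarrow> finite N \<and>
     (\<forall>(u, v)\<in>strat_set c r. \<exists>(x, y)\<in>N. norm (u - x) \<le> eps / 8 \<and> norm (v - y) \<le> eps / 8)"

end

theory Submission
  imports Defs
begin

lemma frob_norm_eq: "frob_norm (A::real^'f^'f) = norm A"
  unfolding frob_norm_def norm_vec_def L2_set_def
  by (simp add: real_sqrt_pow2 sum_nonneg)

lemma l1_le:
  assumes "\<forall>i. 0 \<le> (u::real^'f) $ i" "(\<Sum>i\<in>UNIV. u $ i) \<le> c"
  shows "l1norm u \<le> c"
  using assms unfolding l1norm_def by simp

lemma hit_diff: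
  "cache_hit u P v - cache_hit u Q v = u \<bullet> ((P - Q) *v v)"
  unfolding cache_hit_def by (simp add: matrix_vector_mult_diff_rdistrib inner_diff_right)

theorem theorem1:
  fixes M :: "'w measure"
    and P :: "real^'f^'f"
    and Phat :: "'w \<Rightarrow> real^'f^'f"
    and ut vt :: "'w \<Rightarrow> real^'f"
    and c r eps \<kappa> :: real
    and N :: "((real^'f) \<times> (real^'f)) set"
  assumes "prob_space M"
    and "Phat \<in> borel_measurable M"
    and "\<forall>i j. 0 \<le> P $ i $ j \<and> P $ i $ j \<le> 1"
    and "c > 0" and "r > 0" and "eps > 0" and "\<kappa> > 0"
    and kappa: "\<forall>(x::real^'f) (y::real^'f) (A::real^'f^'f).
                  \<bar>x \<bullet> (A *v y)\<bar> \<le> \<kappa> * l1norm x * l1norm y * frob_norm A"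
    and argmax: "\<forall>\<omega>\<in>space M. (ut \<omega>, vt \<omega>) \<in> strat_set c r \<and>
                  (\<forall>(u, v)\<in>strat_set c r. cache_hit u (Phat \<omega>) v \<le> cache_hit (ut \<omega>) (Phat \<omega>) (vt \<omega>))"
    and "is_eps_cover eps c r N"
  shows "measure M {\<omega>\<in>space M.
            (SUP uv\<in>strat_set c r. cache_hit (fst uv) P (snd uv)) - cache_hit (ut \<omega>) P (vt \<omega>) \<ge> eps}
         \<le> real (card N) * measure M {\<omega>\<in>space M. frob_norm (P - Phat \<omega>) \<ge> eps / (4 * \<kappa> * r * c)}"
proof -
  interpret prob_space M by fact
  define S :: "((real^'f) \<times> (real^'f)) set" where "S = strat_set c r"
  have z: "(0, 0) \<in> S" unfolding S_def strat_set_def using assms(4,5) by auto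
  have bnd: "\<bar>u \<bullet> (D *v v)\<bar> \<le> \<kappa> * c * r * frob_norm D" if "(u, v) \<in> S" for u v D
  proof -
    have lu: "l1norm u \<le> c" and lv: "l1norm v \<le> r"
      using that unfolding S_def strat_set_def by (auto intro!: l1_le)
    have n: "0 \<le> l1norm u" "0 \<le> l1norm v" "0 \<le> frob_norm D"
      unfolding l1norm_def frob_norm_eq by (auto intro: sum_nonneg)
    have "\<kappa> * l1norm u * l1norm v * frob_norm D \<le> \<kappa> * c * r * frob_norm D"
      using lu lv n assms(7) by (intro mult_right_mono mult_mono mult_left_mono) auto
    thus ?thesis using kappa by (meson order_trans)
  qed
  let ?A = "{\<omega>\<in>space M.
            (SUP uv\<in>strat_set c r. cache_hit (fst uv) P (snd uv)) - cache_hit (ut \<omega>) P (vt \<omega>) \<ge> eps}"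
  let ?B = "{\<omega>\<in>space M. frob_norm (P - Phat \<omega>) \<ge> eps / (4 * \<kappa> * r * c)}"
  have sub: "?A \<subseteq> ?B"
  proof (rule subsetI, rule ccontr)
    fix \<omega> assume A: "\<omega> \<in> ?A" and nB: "\<omega> \<notin> ?B"
    hence om: "\<omega> \<in> space M" by auto
    define F where "F = frob_norm (P - Phat \<omega>)"
    have F: "F < eps / (4 * \<kappa> * r * c)" using nB om unfolding F_def by auto
    have ts: "(ut \<omega>, vt \<omega>) \<in> S" and am: "\<And>u v. (u, v) \<in> S \<Longrightarrow>
        cache_hit u (Phat \<omega>) v \<le> cache_hit (ut \<omega>) (Phat \<omega>) (vt \<omega>)"
      using argmax om unfolding S_def by auto
    have K: "\<kappa> * c * r * F < eps / 4"
    proof -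
      have "\<kappa> * c * r * F < \<kappa> * c * r * (eps / (4 * \<kappa> * r * c))"
        using F assms(4,5,7) by (intro mult_strict_left_mono) auto
      also have "\<dots> = eps / 4" using assms(4,5,7) by (simp add: field_simps)
      finally show ?thesis .
    qed
    have each: "cache_hit u P v \<le> cache_hit (ut \<omega>) P (vt \<omega>) + eps / 2" if "(u, v) \<in> S" for u v
    proof -
      have 1: "cache_hit u P v - cache_hit u (Phat \<omega>) v \<le> \<kappa> * c * r * F"
        using bnd[OF that, of "P - Phat \<omega>"] hit_diff[of u P v "Phat \<omega>"] unfolding F_def by linarith
      have 2: "cache_hit (ut \<omega>) P (vt \<omega>) - cache_hit (ut \<omega>) (Phat \<omega>) (vt \<omega>) \<ge> - (\<kappa> * c * r * F)"
        using bnd[OF ts, of "P - Phat \<omega>"] hit_diff[of "ut \<omega>" P "vt \<omega>" "Phat \<omega>"] unfolding F_def by linarith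
      show ?thesis using 1 2 am[OF that] K by linarith
    qed
    have "(SUP uv\<in>S. cache_hit (fst uv) P (snd uv)) \<le> cache_hit (ut \<omega>) P (vt \<omega>) + eps / 2"
      using z each by (intro cSUP_least) auto
    thus False using A assms(6) unfolding S_def by auto
  qed
  have Bm: "?B \<in> sets M"
  proof -
    have "(\<lambda>\<omega>. norm (P - Phat \<omega>)) \<in> borel_measurable M"
      using assms(2) by measurable
    thus ?thesis unfolding frob_norm_eq by measurable
  qed
  have "measure M ?A \<le> measure M ?B"
  proof (cases "?A \<in> sets M")
    case True thus ?thesis using sub Bm by (intro finite_measure_mono) auto
  next
    case False thus ?thesis by (simp add: measure_notin_sets)
  qed
  moreover have "card N \<ge> 1"
  proof -
    have "finite N" "N \<noteq> {}" using assms(10) z unfolding is_eps_cover_def S_def by auto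
    thus ?thesis by (simp add: Suc_le_eq card_gt_0_iff)
  qed
  moreover have "0 \<le> measure M ?B" by simp
  ultimately show ?thesis
  proof -
    assume a: "measure M ?A \<le> measure M ?B" and b: "card N \<ge> 1" and c: "0 \<le> measure M ?B"
    have "1 * measure M ?B \<le> real (card N) * measure M ?B"
      using b c by (intro mult_right_mono) auto
    thus ?thesis using a by simp
  qed
qed

end
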